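(* Let $S$ be a semigroup, let $a\in S$, and define $$P=\{x\in Sa: x\,\mathscr L\, ax\},\quad P'=\{x\in Sa: x\,\mathscr J\, ax\},\quad P''=\{x\in S: x\in xSa\},\quad P'''=\{x\in S: x\in S^1xSa\}.$$ For $x\in Sa$, write $K_x$ for the $\mathscr K$-class of $x$ in $S$ and $K^a_x$ for the $\mathscr K$-class of $x$ in the semigroup $Sa$, for $\mathscr K\in\{\mathscr L,\mathscr R,\mathscr H,\mathscr D,\mathscr J\}$. Then for every $x\in Sa$: (i) $L^a_x=L_x\cap P$ if $x\in P$, and $L^a_x=\{x\}$ if $x\notin P$; (ii) $R^a_x=R_x\cap P''$ if $x\in P''$, and $R^a_x=\{x\}$ if $x\notin P''$; (iii) $H^a_x=H_x$ if $x\in P\cap P''$, and $H^a_x=\{x\}$ if $x\notin P\cap P''$; (iv) $D^a_x=D_x\cap P\cap P''$ if $x\in P\cap P''$; $D^a_x=R^a_x$ if $x\notin P$; and $D^a_x=L^a_x$ if $x\notin P''$; (v) $J^a_x=J_x\cap P'\cap P'''$ if $x\in P'\cap P'''$, and $J^a_x=D^a_x$ if $x\notin P'\cap P'''$.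
   Context: $Sa=\{xa:x\in S\}$. $S^1$ denotes $S$ with an identity adjoined if $S$ is not a monoid. Green's relations on a semigroup $T$: $x\,\mathscr L\,y$ iff $T^1x=T^1y$; $x\,\mathscr R\,y$ iff $xT^1=yT^1$; $x\,\mathscr J\,y$ iff $T^1xT^1=T^1yT^1$; $\mathscr H=\mathscr L\cap\mathscr R$; $\mathscr D=\mathscr L\vee\mathscr R=\mathscr L\circ\mathscr R$. The relations on $S$ and on $Sa$ are computed in the respective semigroups. *)

theory Defs
  imports Main
begin

text \<open>The semigroup S is the ambient type 'a (class semigroup_mult).
 Green's relations are computed in a subsemigroup T of S (T = UNIV for S itself).
 For T we have T^1 x = {x} \<union> T x, etc.\<close>

definition Sa :: "'a::semigroup_mult \<Rightarrow> 'a set" where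
  "Sa a = {s * a | s. True}"

definition lprin :: "'a::semigroup_mult set \<Rightarrow> 'a \<Rightarrow> 'a set" where
  "lprin T x = insert x {t * x | t. t \<in> T}"

definition rprin :: "'a::semigroup_mult set \<Rightarrow> 'a \<Rightarrow> 'a set" where
  "rprin T x = insert x {x * t | t. t \<in> T}"

definition jprin :: "'a::semigroup_mult set \<Rightarrow> 'a \<Rightarrow> 'a set" where
  "jprin T x = insert x ({t * x | t. t \<in> T} \<union> {x * t | t. t \<in> T}
                         \<union> {s * x * t | s t. s \<in> T \<and> t \<in> T})"

definition greenL :: "'a::semigroup_mult set \<Rightarrow> 'a \<Rightarrow> 'a \<Rightarrow> bool" where
  "greenL T x y \<longleftrightarrow> lprin T x = lprin T y"

definition greenR :: "'a::semigroup_mult set \<Rightarrow> 'a \<Rightarrow> 'a \<Rightarrow> bool" where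
  "greenR T x y \<longleftrightarrow> rprin T x = rprin T y"

definition greenJ :: "'a::semigroup_mult set \<Rightarrow> 'a \<Rightarrow> 'a \<Rightarrow> bool" where
  "greenJ T x y \<longleftrightarrow> jprin T x = jprin T y"

definition greenH :: "'a::semigroup_mult set \<Rightarrow> 'a \<Rightarrow> 'a \<Rightarrow> bool" where
  "greenH T x y \<longleftrightarrow> greenL T x y \<and> greenR T x y"

definition greenD :: "'a::semigroup_mult set \<Rightarrow> 'a \<Rightarrow> 'a \<Rightarrow> bool" where
  "greenD T x y \<longleftrightarrow> (\<exists>z\<in>T. greenL T x z \<and> greenR T z y)"

definition gclass :: "('a set \<Rightarrow> 'a \<Rightarrow> 'a \<Rightarrow> bool) \<Rightarrow> 'a set \<Rightarrow> 'a \<Rightarrow> 'a set" where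
  "gclass K T x = {y \<in> T. K T x y}"

text \<open>The sets P, P', P'', P''' of the theorem.\<close>
definition P1 :: "'a::semigroup_mult \<Rightarrow> 'a set" where
  "P1 a = {x \<in> Sa a. greenL UNIV x (a * x)}"

definition P2 :: "'a::semigroup_mult \<Rightarrow> 'a set" where
  "P2 a = {x \<in> Sa a. greenJ UNIV x (a * x)}"

definition P3 :: "'a::semigroup_mult \<Rightarrow> 'a set" where
  "P3 a = {x. \<exists>s. x = x * s * a}"

definition P4 :: "'a::semigroup_mult \<Rightarrow> 'a set" where
  "P4 a = {x. (\<exists>s. x = x * s * a) \<or> (\<exists>u s. x = u * x * s * a)}"

end

theory Submission
  imports Defs
begin


definition closed :: "'a::semigroup_mult set \<Rightarrow> bool" where
 "closed T \<longleftrightarrow> (\<forall>s\<in>T. \<forall>t\<in>T. s*t \<in> T)"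
lemma lprin_mem: "z \<in> lprin T x \<longleftrightarrow> z = x \<or> (\<exists>t\<in>T. z = t*x)"
  by (auto simp: lprin_def)
lemma rprin_mem: "z \<in> rprin T x \<longleftrightarrow> z = x \<or> (\<exists>t\<in>T. z = x*t)"
  by (auto simp: rprin_def)
lemma jprin_mem: "z \<in> jprin T x \<longleftrightarrow> z = x \<or> (\<exists>t\<in>T. z = t*x) \<or> (\<exists>t\<in>T. z = x*t) \<or> (\<exists>s\<in>T. \<exists>t\<in>T. z = s*x*t)"
  by (auto simp: jprin_def)
lemma closed_UNIV: "closed UNIV" by (simp add: closed_def)
lemma closed_Sa: "closed (Sa a)" unfolding closed_def Sa_def
  by (auto, metis mult.assoc)
lemma lprin_trans: "closed T \<Longrightarrow> z \<in> lprin T y \<Longrightarrow> y \<in> lprin T x \<Longrightarrow> z \<in> lprin T x"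
  unfolding lprin_mem closed_def by (auto, metis mult.assoc)
lemma rprin_trans: "closed T \<Longrightarrow> z \<in> rprin T y \<Longrightarrow> y \<in> rprin T x \<Longrightarrow> z \<in> rprin T x"
  unfolding rprin_mem closed_def by (auto, metis mult.assoc)
lemma jprin_trans: "closed T \<Longrightarrow> z \<in> jprin T y \<Longrightarrow> y \<in> jprin T x \<Longrightarrow> z \<in> jprin T x"
  unfolding jprin_mem closed_def by (elim disjE bexE; metis mult.assoc)
lemma lprin_eq: "closed T \<Longrightarrow> lprin T x = lprin T y \<longleftrightarrow> x \<in> lprin T y \<and> y \<in> lprin T x"
  by (metis lprin_trans subsetI subset_antisym lprin_mem)
lemma rprin_eq: "closed T \<Longrightarrow> rprin T x = rprin T y \<longleftrightarrow> x \<in> rprin T y \<and> y \<in> rprin T x"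
  by (metis rprin_trans subsetI subset_antisym rprin_mem)
lemma jprin_eq: "closed T \<Longrightarrow> jprin T x = jprin T y \<longleftrightarrow> x \<in> jprin T y \<and> y \<in> jprin T x"
  by (metis jprin_trans subsetI subset_antisym jprin_mem)
lemma Sa_mem: "z \<in> Sa a \<longleftrightarrow> (\<exists>s. z = s*a)" by (auto simp: Sa_def)
lemma bexSa: "(\<exists>t\<in>Sa a. P t) \<longleftrightarrow> (\<exists>s. P (s*a))" by (auto simp: Sa_mem) (metis Sa_mem)
lemma lprin_Sa: "z \<in> lprin (Sa a) x \<longleftrightarrow> z = x \<or> (\<exists>s. z = s*a*x)"
  unfolding lprin_mem bexSa by simp
lemma rprin_Sa: "z \<in> rprin (Sa a) x \<longleftrightarrow> z = x \<or> (\<exists>s. z = x*s*a)"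
  unfolding rprin_mem bexSa by (simp add: mult.assoc)
lemma jprin_Sa: "z \<in> jprin (Sa a) x \<longleftrightarrow> z = x \<or> (\<exists>s. z = s*a*x) \<or> (\<exists>s. z = x*s*a) \<or> (\<exists>s t. z = s*a*x*t*a)"
  unfolding jprin_mem bexSa by (simp add: mult.assoc)
lemma lprin_U: "z \<in> lprin UNIV x \<longleftrightarrow> z = x \<or> (\<exists>s. z = s*x)"
  by (auto simp: lprin_mem)
lemma rprin_U: "z \<in> rprin UNIV x \<longleftrightarrow> z = x \<or> (\<exists>s. z = x*s)"
  by (auto simp: rprin_mem)
lemma jprin_U: "z \<in> jprin UNIV x \<longleftrightarrow> z = x \<or> (\<exists>s. z = s*x) \<or> (\<exists>s. z = x*s) \<or> (\<exists>s t. z = s*x*t)"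
  by (auto simp: jprin_mem)

lemma gL: "closed T \<Longrightarrow> greenL T x y \<longleftrightarrow> x \<in> lprin T y \<and> y \<in> lprin T x"
  by (simp add: greenL_def lprin_eq)
lemma gR: "closed T \<Longrightarrow> greenR T x y \<longleftrightarrow> x \<in> rprin T y \<and> y \<in> rprin T x"
  by (simp add: greenR_def rprin_eq)
lemma gJ: "closed T \<Longrightarrow> greenJ T x y \<longleftrightarrow> x \<in> jprin T y \<and> y \<in> jprin T x"
  by (simp add: greenJ_def jprin_eq)

lemmas gLS = gL[OF closed_Sa] and gLU = gL[OF closed_UNIV]
lemmas gRS = gR[OF closed_Sa] and gRU = gR[OF closed_UNIV]
lemmas gJS = gJ[OF closed_Sa] and gJU = gJ[OF closed_UNIV]

lemma L1: assumes "greenL (Sa a) x y" "x \<noteq> y" "x \<in> Sa a" shows "x \<in> P1 a"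
proof -
  have m: "x \<in> lprin (Sa a) y" "y \<in> lprin (Sa a) x" using assms(1) by (simp_all add: gLS)
  from m(1) assms(2) obtain s where s: "x = s*a*y" unfolding lprin_Sa by blast
  from m(2) assms(2) obtain t where t: "y = t*a*x" unfolding lprin_Sa by metis
  have "x = s*a*y" by (rule s)
  also have "\<dots> = (s*a*t)*(a*x)" by (simp only: t mult.assoc)
  finally have "x \<in> lprin UNIV (a*x)" unfolding lprin_U by (intro disjI2 exI)
  moreover have "a*x \<in> lprin UNIV x" unfolding lprin_U by (intro disjI2 exI[where x=a] refl)
  moreover note assms(3)
  ultimately show ?thesis unfolding P1_def gLU by (intro CollectI conjI)
qed
lemma lprin_mono: "T \<subseteq> T' \<Longrightarrow> z \<in> lprin T x \<Longrightarrow> z \<in> lprin T' x" unfolding lprin_mem by blast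
lemma rprin_mono: "T \<subseteq> T' \<Longrightarrow> z \<in> rprin T x \<Longrightarrow> z \<in> rprin T' x" unfolding rprin_mem by blast
lemma jprin_mono: "T \<subseteq> T' \<Longrightarrow> z \<in> jprin T x \<Longrightarrow> z \<in> jprin T' x" unfolding jprin_mem by blast

lemma L3: "greenL (Sa a) x y \<Longrightarrow> greenL UNIV x y"
  by (meson gLS gLU lprin_mono subset_UNIV)
lemma R3: "greenR (Sa a) x y \<Longrightarrow> greenR UNIV x y"
  by (meson gRS gRU rprin_mono subset_UNIV)
lemma J3: "greenJ (Sa a) x y \<Longrightarrow> greenJ UNIV x y"
  by (meson gJS gJU jprin_mono subset_UNIV)
lemma P1_Sa: "x \<in> P1 a \<Longrightarrow> x \<in> Sa a" by (simp add: P1_def)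
lemma P2_Sa: "x \<in> P2 a \<Longrightarrow> x \<in> Sa a" by (simp add: P2_def)

lemma L2: assumes "x \<in> P1 a" "y \<in> P1 a" "greenL UNIV x y" shows "x \<in> lprin (Sa a) y"
proof -
  have "x \<in> lprin UNIV y" using assms(3) by (simp add: gLU)
  moreover have "y \<in> lprin UNIV (a*y)" using assms(2) by (simp add: P1_def gLU)
  ultimately have 1: "x \<in> lprin UNIV (a*y)" by (rule lprin_trans[OF closed_UNIV])
  have 2: "x \<in> lprin UNIV (a*x)" using assms(1) by (simp add: P1_def gLU)
  from 1 2 show ?thesis unfolding lprin_U lprin_Sa by (elim disjE exE; metis mult.assoc)
qed

lemma R1: assumes "greenR (Sa a) x y" "x \<noteq> y" shows "x \<in> P3 a"
proof -
  have m: "x \<in> rprin (Sa a) y" "y \<in> rprin (Sa a) x" using assms(1) by (simp_all add: gRS)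
  from m(1) assms(2) obtain s where s: "x = y*s*a" unfolding rprin_Sa by blast
  from m(2) assms(2) obtain t where t: "y = x*t*a" unfolding rprin_Sa by metis
  have "x = y*s*a" by (rule s)
  also have "\<dots> = x*(t*a*s)*a" by (simp only: t mult.assoc)
  finally show ?thesis unfolding P3_def by (intro CollectI exI)
qed

lemma R2: assumes "x \<in> P3 a" "greenR UNIV x y" shows "x \<in> rprin (Sa a) y"
proof -
  from assms(1) obtain s where "x = x*s*a" unfolding P3_def by blast
  moreover have "x \<in> rprin UNIV y" using assms by (simp add: gRU)
  ultimately show ?thesis unfolding rprin_U rprin_Sa by (elim disjE exE; metis mult.assoc)
qed

lemma C1: assumes "greenL UNIV x y" "x \<in> P3 a" shows "y \<in> P3 a"
proof -
  from assms(2) obtain s where "x = x*s*a" unfolding P3_def by blast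
  moreover have "y \<in> lprin UNIV x" using assms by (simp add: gLU)
  ultimately show ?thesis unfolding lprin_U P3_def mem_Collect_eq by (elim disjE exE; metis mult.assoc)
qed

lemma C2: assumes "x \<in> P1 a" "greenR UNIV x y" "y \<in> Sa a" shows "y \<in> P1 a"
proof -
  have "x \<in> lprin UNIV (a*x)" using assms(1) by (simp add: P1_def gLU)
  moreover have "y \<in> rprin UNIV x" using assms(2) by (simp add: gRU)
  ultimately have "y \<in> lprin UNIV (a*y)" unfolding lprin_U rprin_U by (elim disjE exE; metis mult.assoc)
  moreover have "a*y \<in> lprin UNIV y" unfolding lprin_U by blast
  ultimately show ?thesis using assms(3) by (simp add: P1_def gLU)
qed

lemma C3: assumes "greenL UNIV x y" "x \<in> Sa a" shows "y \<in> Sa a"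
proof -
  have "y \<in> lprin UNIV x" using assms by (simp add: gLU)
  thus ?thesis using assms(2) unfolding lprin_U Sa_mem by (metis mult.assoc)
qed


definition Q :: "'a::semigroup_mult \<Rightarrow> 'a \<Rightarrow> bool" where
  "Q a x \<longleftrightarrow> (\<exists>c d. x = c*a*x*d*a)"
lemma P3_Sa: assumes "x \<in> P3 a" shows "x \<in> Sa a"
proof -
  from assms obtain s where s: "x = x*s*a" unfolding P3_def by blast
  from s show ?thesis unfolding Sa_mem by (rule exI)
qed

lemma J0: assumes "x \<in> jprin (Sa a) y" "y \<in> jprin (Sa a) x"
  shows "Q a x \<or> greenL (Sa a) x y \<or> greenR (Sa a) x y"
  using assms unfolding gLS gRS Q_def jprin_Sa lprin_Sa rprin_Sa
  by (elim disjE exE; metis mult.assoc)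

lemma QP: assumes "x \<in> Sa a" "Q a x" shows "x \<in> P2 a" "x \<in> P4 a"
proof -
  from assms(2) obtain c d where e: "x = c*a*x*d*a" unfolding Q_def by blast
  from e have "x = c*(a*x)*(d*a)" by (simp only: mult.assoc)
  hence "x \<in> jprin UNIV (a*x)" unfolding jprin_U by (intro disjI2 exI)
  moreover have "a*x \<in> jprin UNIV x" unfolding jprin_U by blast
  ultimately show "x \<in> P2 a" using assms(1) unfolding P2_def gJU by (intro CollectI conjI)
  from e have "x = (c*a)*x*d*a" by (simp only: mult.assoc)
  thus "x \<in> P4 a" unfolding P4_def by (intro CollectI disjI2 exI)
qed

lemma PQ: assumes "x \<in> P2 a" "x \<in> P4 a" shows "Q a x"
proof -
  have 1: "x \<in> jprin UNIV (a*x)" using assms(1) by (simp add: P2_def gJU)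
  have 2: "(\<exists>s. x = x*s*a) \<or> (\<exists>u s. x = u*x*s*a)" using assms(2) by (simp add: P4_def)
  from 1 2 show ?thesis unfolding jprin_U Q_def
    by (elim disjE exE; metis mult.assoc)
qed

lemma J2: assumes "Q a x" "x \<in> jprin (Sa a) y" "y \<in> jprin (Sa a) x" shows "Q a y"
proof -
  from assms(1) obtain c d where "x = c*a*x*d*a" unfolding Q_def by blast
  with assms(2,3) show ?thesis unfolding jprin_Sa Q_def
    by (elim disjE exE; metis mult.assoc)
qed

lemma K: assumes "Q a x" "Q a y" "x \<in> jprin UNIV y" shows "x \<in> jprin (Sa a) y"
proof -
  from assms(1) obtain c d where "x = c*a*x*d*a" unfolding Q_def by blast
  moreover from assms(2) obtain c' d' where "y = c'*a*y*d'*a" unfolding Q_def by blast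
  ultimately show ?thesis using assms(3) unfolding jprin_Sa jprin_U
    by (elim disjE exE; metis mult.assoc)
qed


lemma greenL_sym: "greenL T x y \<Longrightarrow> greenL T y x" by (simp add: greenL_def)
lemma greenR_sym: "greenR T x y \<Longrightarrow> greenR T y x" by (simp add: greenR_def)
lemma greenJ_sym: "greenJ T x y \<Longrightarrow> greenJ T y x" by (simp add: greenJ_def)
lemma greenL_refl: "greenL T x x" by (simp add: greenL_def)
lemma greenR_refl: "greenR T x x" by (simp add: greenR_def)
lemma lprin_jprin: "z \<in> lprin T x \<Longrightarrow> z \<in> jprin T x" unfolding lprin_mem jprin_mem by blast
lemma rprin_jprin: "z \<in> rprin T x \<Longrightarrow> z \<in> jprin T x" unfolding rprin_mem jprin_mem by blast
lemma gclass_mem: "y \<in> gclass K T x \<longleftrightarrow> y \<in> T \<and> K T x y" by (simp add: gclass_def)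

lemma partL1: assumes "x \<in> P1 a"
  shows "gclass greenL (Sa a) x = gclass greenL UNIV x \<inter> P1 a"
proof (rule set_eqI)
  fix y
  show "y \<in> gclass greenL (Sa a) x \<longleftrightarrow> y \<in> gclass greenL UNIV x \<inter> P1 a"
  proof
    assume "y \<in> gclass greenL (Sa a) x"
    hence y: "y \<in> Sa a" and L: "greenL (Sa a) x y" by (simp_all add: gclass_mem)
    have "y \<in> P1 a"
    proof (cases "y = x")
      case True thus ?thesis using assms by simp
    next
      case False show ?thesis by (rule L1[OF greenL_sym[OF L] False y])
    qed
    thus "y \<in> gclass greenL UNIV x \<inter> P1 a" using L3[OF L] by (simp add: gclass_mem)
  next
    assume "y \<in> gclass greenL UNIV x \<inter> P1 a"
    hence L: "greenL UNIV x y" and y: "y \<in> P1 a" by (simp_all add: gclass_mem)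
    have "greenL (Sa a) x y" unfolding gLS
      using L2[OF assms y L] L2[OF y assms greenL_sym[OF L]] by simp
    thus "y \<in> gclass greenL (Sa a) x" using P1_Sa[OF y] by (simp add: gclass_mem)
  qed
qed

lemma partL2: assumes "x \<in> Sa a" "x \<notin> P1 a"
  shows "gclass greenL (Sa a) x = {x}"
proof (rule set_eqI)
  fix y
  show "y \<in> gclass greenL (Sa a) x \<longleftrightarrow> y \<in> {x}"
  proof
    assume "y \<in> gclass greenL (Sa a) x"
    hence L: "greenL (Sa a) x y" by (simp add: gclass_mem)
    show "y \<in> {x}"
    proof (rule ccontr)
      assume "y \<notin> {x}" hence "x \<noteq> y" by simp
      from L1[OF L this assms(1)] assms(2) show False by simp
    qed
  next
    assume "y \<in> {x}" thus "y \<in> gclass greenL (Sa a) x" using assms(1) greenL_refl by (simp add: gclass_mem)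
  qed
qed
lemma partR1: assumes "x \<in> P3 a"
  shows "gclass greenR (Sa a) x = gclass greenR UNIV x \<inter> P3 a"
proof (rule set_eqI)
  fix y
  show "y \<in> gclass greenR (Sa a) x \<longleftrightarrow> y \<in> gclass greenR UNIV x \<inter> P3 a"
  proof
    assume "y \<in> gclass greenR (Sa a) x"
    hence y: "y \<in> Sa a" and R: "greenR (Sa a) x y" by (simp_all add: gclass_mem)
    have "y \<in> P3 a"
    proof (cases "y = x")
      case True thus ?thesis using assms by simp
    next
      case False show ?thesis by (rule R1[OF greenR_sym[OF R] False])
    qed
    thus "y \<in> gclass greenR UNIV x \<inter> P3 a" using R3[OF R] by (simp add: gclass_mem)
  next
    assume "y \<in> gclass greenR UNIV x \<inter> P3 a"
    hence R: "greenR UNIV x y" and y: "y \<in> P3 a" by (simp_all add: gclass_mem)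
    have "greenR (Sa a) x y" unfolding gRS
      using R2[OF assms R] R2[OF y greenR_sym[OF R]] by simp
    thus "y \<in> gclass greenR (Sa a) x" using P3_Sa[OF y] by (simp add: gclass_mem)
  qed
qed

lemma partR2: assumes "x \<in> Sa a" "x \<notin> P3 a"
  shows "gclass greenR (Sa a) x = {x}"
proof (rule set_eqI)
  fix y
  show "y \<in> gclass greenR (Sa a) x \<longleftrightarrow> y \<in> {x}"
  proof
    assume "y \<in> gclass greenR (Sa a) x"
    hence R: "greenR (Sa a) x y" by (simp add: gclass_mem)
    show "y \<in> {x}"
    proof (rule ccontr)
      assume "y \<notin> {x}" hence "x \<noteq> y" by simp
      from R1[OF R this] assms(2) show False by simp
    qed
  next
    assume "y \<in> {x}" thus "y \<in> gclass greenR (Sa a) x" using assms(1) greenR_refl by (simp add: gclass_mem)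
  qed
qed

lemma gclassH: "gclass greenH T x = gclass greenL T x \<inter> gclass greenR T x"
  by (auto simp: gclass_mem greenH_def)

lemma partH1: assumes "x \<in> P1 a" "x \<in> P3 a"
  shows "gclass greenH (Sa a) x = gclass greenH UNIV x"
proof (rule set_eqI)
  fix y
  have "y \<in> gclass greenH (Sa a) x \<longleftrightarrow> y \<in> (gclass greenL UNIV x \<inter> P1 a) \<inter> (gclass greenR UNIV x \<inter> P3 a)"
    unfolding gclassH partL1[OF assms(1)] partR1[OF assms(2)] by (rule refl)
  also have "\<dots> \<longleftrightarrow> y \<in> gclass greenH UNIV x"
  proof
    assume "y \<in> gclass greenH UNIV x"
    hence L: "greenL UNIV x y" and R: "greenR UNIV x y" by (simp_all add: gclass_mem greenH_def)
    have y: "y \<in> Sa a" by (rule C3[OF L P1_Sa[OF assms(1)]])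
    have "y \<in> P1 a" by (rule C2[OF assms(1) R y])
    moreover have "y \<in> P3 a" by (rule C1[OF L assms(2)])
    ultimately show "y \<in> (gclass greenL UNIV x \<inter> P1 a) \<inter> (gclass greenR UNIV x \<inter> P3 a)"
      using L R by (simp add: gclass_mem)
  qed (simp add: gclass_mem greenH_def)
  finally show "y \<in> gclass greenH (Sa a) x \<longleftrightarrow> y \<in> gclass greenH UNIV x" .
qed

lemma partH2: assumes "x \<in> Sa a" "x \<notin> P1 a \<inter> P3 a"
  shows "gclass greenH (Sa a) x = {x}"
proof -
  have x: "x \<in> gclass greenL (Sa a) x" "x \<in> gclass greenR (Sa a) x"
    using assms(1) by (simp_all add: gclass_mem greenL_refl greenR_refl)
  show ?thesis
  proof (cases "x \<in> P1 a")
    case True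
    hence n: "x \<notin> P3 a" using assms(2) by simp
    show ?thesis unfolding gclassH partR2[OF assms(1) n] using x by blast
  next
    case False
    show ?thesis unfolding gclassH partL2[OF assms(1) False] using x by blast
  qed
qed

lemma gD_mem: "y \<in> gclass greenD T x \<longleftrightarrow> y \<in> T \<and> (\<exists>z\<in>T. greenL T x z \<and> greenR T z y)"
  by (simp add: gclass_mem greenD_def)

lemma partD1: assumes "x \<in> P1 a" "x \<in> P3 a"
  shows "gclass greenD (Sa a) x = gclass greenD UNIV x \<inter> P1 a \<inter> P3 a"
proof (rule set_eqI)
  fix y
  have xS: "x \<in> Sa a" by (rule P1_Sa[OF assms(1)])
  show "y \<in> gclass greenD (Sa a) x \<longleftrightarrow> y \<in> gclass greenD UNIV x \<inter> P1 a \<inter> P3 a"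
  proof
    assume "y \<in> gclass greenD (Sa a) x"
    then obtain z where y: "y \<in> Sa a" and z: "z \<in> Sa a" and L: "greenL (Sa a) x z"
      and R: "greenR (Sa a) z y" by (auto simp: gD_mem)
    have z1: "z \<in> P1 a"
    proof (cases "z = x")
      case True thus ?thesis using assms by simp
    next
      case False show ?thesis by (rule L1[OF greenL_sym[OF L] False z])
    qed
    have LU: "greenL UNIV x z" by (rule L3[OF L])
    have z3: "z \<in> P3 a" by (rule C1[OF LU assms(2)])
    have RU: "greenR UNIV z y" by (rule R3[OF R])
    have y3: "y \<in> P3 a"
    proof (cases "y = z")
      case True thus ?thesis using z3 by simp
    next
      case False show ?thesis by (rule R1[OF greenR_sym[OF R] False])
    qed
    have y1: "y \<in> P1 a" by (rule C2[OF z1 RU y])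
    show "y \<in> gclass greenD UNIV x \<inter> P1 a \<inter> P3 a"
      using y1 y3 LU RU by (auto simp: gD_mem)
  next
    assume "y \<in> gclass greenD UNIV x \<inter> P1 a \<inter> P3 a"
    then obtain z where LU: "greenL UNIV x z" and RU: "greenR UNIV z y"
      and y1: "y \<in> P1 a" and y3: "y \<in> P3 a" by (auto simp: gD_mem)
    have z: "z \<in> Sa a" by (rule C3[OF LU xS])
    have z3: "z \<in> P3 a" by (rule C1[OF LU assms(2)])
    have z1: "z \<in> P1 a" by (rule C2[OF y1 greenR_sym[OF RU] z])
    have L: "greenL (Sa a) x z" unfolding gLS
      using L2[OF assms(1) z1 LU] L2[OF z1 assms(1) greenL_sym[OF LU]] by simp
    have R: "greenR (Sa a) z y" unfolding gRS
      using R2[OF z3 RU] R2[OF y3 greenR_sym[OF RU]] by simp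
    show "y \<in> gclass greenD (Sa a) x" using P1_Sa[OF y1] z L R by (auto simp: gD_mem)
  qed
qed

lemma partD2: assumes "x \<in> Sa a" "x \<notin> P1 a"
  shows "gclass greenD (Sa a) x = gclass greenR (Sa a) x"
proof (rule set_eqI)
  fix y
  show "y \<in> gclass greenD (Sa a) x \<longleftrightarrow> y \<in> gclass greenR (Sa a) x"
  proof
    assume "y \<in> gclass greenD (Sa a) x"
    then obtain z where y: "y \<in> Sa a" and z: "z \<in> Sa a" and L: "greenL (Sa a) x z"
      and R: "greenR (Sa a) z y" by (auto simp: gD_mem)
    have "z = x"
    proof (rule ccontr)
      assume "z \<noteq> x" hence "x \<noteq> z" by simp
      from L1[OF L this assms(1)] assms(2) show False by simp
    qed
    thus "y \<in> gclass greenR (Sa a) x" using y R by (simp add: gclass_mem)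
  next
    assume "y \<in> gclass greenR (Sa a) x"
    hence "y \<in> Sa a" "greenR (Sa a) x y" by (simp_all add: gclass_mem)
    thus "y \<in> gclass greenD (Sa a) x" using assms(1) greenL_refl[of "Sa a" x]
      unfolding gD_mem by blast
  qed
qed

lemma partD3: assumes "x \<in> Sa a" "x \<notin> P3 a"
  shows "gclass greenD (Sa a) x = gclass greenL (Sa a) x"
proof (rule set_eqI)
  fix y
  show "y \<in> gclass greenD (Sa a) x \<longleftrightarrow> y \<in> gclass greenL (Sa a) x"
  proof
    assume "y \<in> gclass greenD (Sa a) x"
    then obtain z where y: "y \<in> Sa a" and z: "z \<in> Sa a" and L: "greenL (Sa a) x z"
      and R: "greenR (Sa a) z y" by (auto simp: gD_mem)
    have "z \<notin> P3 a"
    proof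
      assume "z \<in> P3 a"
      from C1[OF greenL_sym[OF L3[OF L]] this] assms(2) show False by simp
    qed
    have "y = z"
    proof (rule ccontr)
      assume "y \<noteq> z" hence "z \<noteq> y" by simp
      from R1[OF R this] \<open>z \<notin> P3 a\<close> show False by simp
    qed
    thus "y \<in> gclass greenL (Sa a) x" using y L by (simp add: gclass_mem)
  next
    assume "y \<in> gclass greenL (Sa a) x"
    hence "y \<in> Sa a" "greenL (Sa a) x y" by (simp_all add: gclass_mem)
    thus "y \<in> gclass greenD (Sa a) x" using greenR_refl[of "Sa a" y]
      unfolding gD_mem by blast
  qed
qed

lemma partJ1: assumes "x \<in> P2 a" "x \<in> P4 a"
  shows "gclass greenJ (Sa a) x = gclass greenJ UNIV x \<inter> P2 a \<inter> P4 a"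
proof (rule set_eqI)
  fix y
  have Qx: "Q a x" by (rule PQ[OF assms])
  show "y \<in> gclass greenJ (Sa a) x \<longleftrightarrow> y \<in> gclass greenJ UNIV x \<inter> P2 a \<inter> P4 a"
  proof
    assume "y \<in> gclass greenJ (Sa a) x"
    hence y: "y \<in> Sa a" and J: "greenJ (Sa a) x y" by (simp_all add: gclass_mem)
    have m: "x \<in> jprin (Sa a) y" "y \<in> jprin (Sa a) x" using J by (simp_all add: gJS)
    have Qy: "Q a y" by (rule J2[OF Qx m])
    show "y \<in> gclass greenJ UNIV x \<inter> P2 a \<inter> P4 a"
      using QP[OF y Qy] J3[OF J] by (simp add: gclass_mem)
  next
    assume "y \<in> gclass greenJ UNIV x \<inter> P2 a \<inter> P4 a"
    hence J: "greenJ UNIV x y" and y2: "y \<in> P2 a" and y4: "y \<in> P4 a" by (simp_all add: gclass_mem)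
    have Qy: "Q a y" by (rule PQ[OF y2 y4])
    have m: "x \<in> jprin UNIV y" "y \<in> jprin UNIV x" using J by (simp_all add: gJU)
    have "greenJ (Sa a) x y" unfolding gJS using K[OF Qx Qy m(1)] K[OF Qy Qx m(2)] by simp
    thus "y \<in> gclass greenJ (Sa a) x" using P2_Sa[OF y2] by (simp add: gclass_mem)
  qed
qed

lemma partJ2: assumes "x \<in> Sa a" "x \<notin> P2 a \<inter> P4 a"
  shows "gclass greenJ (Sa a) x = gclass greenD (Sa a) x"
proof (rule set_eqI)
  fix y
  have nQ: "\<not> Q a x" using QP[OF assms(1)] assms(2) by blast
  show "y \<in> gclass greenJ (Sa a) x \<longleftrightarrow> y \<in> gclass greenD (Sa a) x"
  proof
    assume "y \<in> gclass greenJ (Sa a) x"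
    hence y: "y \<in> Sa a" and J: "greenJ (Sa a) x y" by (simp_all add: gclass_mem)
    have m: "x \<in> jprin (Sa a) y" "y \<in> jprin (Sa a) x" using J by (simp_all add: gJS)
    from J0[OF m] nQ have "greenL (Sa a) x y \<or> greenR (Sa a) x y" by simp
    thus "y \<in> gclass greenD (Sa a) x"
    proof
      assume "greenL (Sa a) x y"
      thus ?thesis using y greenR_refl[of "Sa a" y] by (auto simp: gD_mem)
    next
      assume "greenR (Sa a) x y"
      thus ?thesis using y assms(1) greenL_refl[of "Sa a" x] by (auto simp: gD_mem)
    qed
  next
    assume "y \<in> gclass greenD (Sa a) x"
    then obtain z where y: "y \<in> Sa a" and L: "greenL (Sa a) x z"
      and R: "greenR (Sa a) z y" by (auto simp: gD_mem)
    have l: "x \<in> lprin (Sa a) z" "z \<in> lprin (Sa a) x" using L by (simp_all add: gLS)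
    have r: "z \<in> rprin (Sa a) y" "y \<in> rprin (Sa a) z" using R by (simp_all add: gRS)
    have "x \<in> jprin (Sa a) y"
      by (rule jprin_trans[OF closed_Sa lprin_jprin[OF l(1)] rprin_jprin[OF r(1)]])
    moreover have "y \<in> jprin (Sa a) x"
      by (rule jprin_trans[OF closed_Sa rprin_jprin[OF r(2)] lprin_jprin[OF l(2)]])
    ultimately have "greenJ (Sa a) x y" by (simp add: gJS)
    thus "y \<in> gclass greenJ (Sa a) x" using y by (simp add: gclass_mem)
  qed
qed


theorem theorem3p8:
  fixes a x :: "'a::semigroup_mult"
  assumes "x \<in> Sa a"
  shows
   "(x \<in> P1 a \<longrightarrow> gclass greenL (Sa a) x = gclass greenL UNIV x \<inter> P1 a) \<and>
    (x \<notin> P1 a \<longrightarrow> gclass greenL (Sa a) x = {x}) \<and>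
    (x \<in> P3 a \<longrightarrow> gclass greenR (Sa a) x = gclass greenR UNIV x \<inter> P3 a) \<and>
    (x \<notin> P3 a \<longrightarrow> gclass greenR (Sa a) x = {x}) \<and>
    (x \<in> P1 a \<inter> P3 a \<longrightarrow> gclass greenH (Sa a) x = gclass greenH UNIV x) \<and>
    (x \<notin> P1 a \<inter> P3 a \<longrightarrow> gclass greenH (Sa a) x = {x}) \<and>
    (x \<in> P1 a \<inter> P3 a \<longrightarrow>
       gclass greenD (Sa a) x = gclass greenD UNIV x \<inter> P1 a \<inter> P3 a) \<and>
    (x \<notin> P1 a \<longrightarrow> gclass greenD (Sa a) x = gclass greenR (Sa a) x) \<and>
    (x \<notin> P3 a \<longrightarrow> gclass greenD (Sa a) x = gclass greenL (Sa a) x) \<and>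
    (x \<in> P2 a \<inter> P4 a \<longrightarrow>
       gclass greenJ (Sa a) x = gclass greenJ UNIV x \<inter> P2 a \<inter> P4 a) \<and>
    (x \<notin> P2 a \<inter> P4 a \<longrightarrow> gclass greenJ (Sa a) x = gclass greenD (Sa a) x)"
  proof -
  have xS: "x \<in> Sa a" by (rule assms)
  show ?thesis
    using partL1[of x a] partL2[OF xS] partR1[of x a] partR2[OF xS]
      partH1[of x a] partH2[OF xS] partD1[of x a] partD2[OF xS] partD3[OF xS]
      partJ1[of x a] partJ2[OF xS]
    by blast
qed

end
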